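(* (Deterministic error bounds, exact sparsity.) Let $\hat\Gamma\in\mathbb R^{q\times q}$ be symmetric positive semidefinite, $\hat\gamma\in\mathbb R^q$, and $\beta^*\in\mathbb R^q$. Let $J=\mathrm{supp}(\beta^* )$ with $|J|=k$ and $J^C\ne\emptyset$. Let $w_j\ge0$ be weights with $\min_{j\in J^C}w_j=1$, and set $r_w=\max_{j\in J}w_j$ (with value $0$ if $J=\emptyset$). Let $\lambda>0$, and let $\hat\beta$ be any minimizer of $-2\beta'\hat\gamma+\beta'\hat\Gamma\beta+\lambda\sum_j w_j|\beta_j|$. Suppose the following hold: - $\|\hat\gamma-\hat\Gamma\beta^*\|_\infty\le\lambda/4$; - there exist $\alpha>0$ and $\tau\ge0$ with $\theta'\hat\Gamma\theta\ge\alpha\|\theta\|_2^2-\tau\|\theta\|_1^2$ for all $\theta\in\mathbb R^q$; - $4(1+r_w)^2k\tau\le\alpha/2$. Then $$\|\hat\beta-\beta^*\|_2\le\frac{1+2r_w}{\alpha}\sqrt k\,\lambda,\qquad \|\hat\beta-\beta^*\|_1\le\frac{2+6r_w+4r_w^2}{\alpha}k\lambda,$$ $$(\hat\beta-\beta^* )'\hat\Gamma(\hat\beta-\beta^* )\le\frac{(1+2r_w)^2}{2\alpha}k\lambda^2 .$$ If $J\ne\emptyset$ and $s_0=\min_{j\in J}|\beta^*_j|$, then $$|\mathrm{supp}(\beta^* )\setminus\mathrm{supp}(\hat\beta)|\le\frac{2+6r_w+4r_w^2}{s_0\alpha}k\lambda .$$ Finally, for $\tilde\beta_j=\hat\beta_j\mathbf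 1(|\hat\beta_j|>\lambda)$, $$|\mathrm{supp}(\tilde\beta)\setminus\mathrm{supp}(\beta^* )|\le(1+2r_w)^2k/\alpha .$$
   Context: $\|\cdot\|_1,\|\cdot\|_2,\|\cdot\|_\infty$ are the usual vector norms and $\mathrm{supp}(v)=\{j:v_j\neq0\}$. *)

theory Defs
  imports "HOL-Analysis.Analysis"
begin

definition supp :: "real ^ 'n \<Rightarrow> 'n set" where
  "supp v = {j. v $ j \<noteq> 0}"

definition norm1 :: "real ^ 'n::finite \<Rightarrow> real" where
  "norm1 v = (\<Sum>j\<in>UNIV. \<bar>v $ j\<bar>)"

definition norminf :: "real ^ 'n::finite \<Rightarrow> real" where
  "norminf v = Max ((\<lambda>j. \<bar>v $ j\<bar>) ` UNIV)"

definition quadform :: "real ^ 'n::finite ^ 'n \<Rightarrow> real ^ 'n \<Rightarrow> real" where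
  "quadform G x = x \<bullet> (G *v x)"

definition lasso_obj :: "real ^ 'n::finite ^ 'n \<Rightarrow> real ^ 'n \<Rightarrow> ('n \<Rightarrow> real) \<Rightarrow> real \<Rightarrow> real ^ 'n \<Rightarrow> real" where
  "lasso_obj G g w lam b = - 2 * (b \<bullet> g) + quadform G b + lam * (\<Sum>j\<in>UNIV. w j * \<bar>b $ j\<bar>)"

end

theory Submission
  imports Defs
begin


lemma sym_inner:
  fixes G :: "real ^ 'n::finite ^ 'n"
  assumes "transpose G = G"
  shows "x \<bullet> (G *v y) = y \<bullet> (G *v x)"
proof -
  have "x \<bullet> (G *v y) = (x v* G) \<bullet> y" by (simp add: dot_lmul_matrix)
  also have "x v* G = transpose G *v x" by simp
  finally show ?thesis using assms by (simp add: inner_commute)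
qed

lemma quad_add:
  fixes G :: "real ^ 'n::finite ^ 'n"
  assumes "transpose G = G"
  shows "quadform G (a + d) = quadform G a + quadform G d + 2 * (d \<bullet> (G *v a))"
  using sym_inner[OF assms, of a d]
  by (simp add: quadform_def matrix_vector_right_distrib inner_add_left inner_add_right)

lemma inner_le_norm1:
  fixes d h :: "real ^ 'n::finite"
  shows "\<bar>d \<bullet> h\<bar> \<le> norm1 d * norminf h"
proof -
  have "\<bar>d \<bullet> h\<bar> = \<bar>\<Sum>j\<in>UNIV. d$j * h$j\<bar>" by (simp add: inner_vec_def)
  also have "\<dots> \<le> (\<Sum>j\<in>UNIV. \<bar>d$j\<bar> * \<bar>h$j\<bar>)"
    by (rule order_trans[OF sum_abs]) (simp add: abs_mult)
  also have "\<dots> \<le> (\<Sum>j\<in>UNIV. \<bar>d$j\<bar> * norminf h)"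
    by (rule sum_mono, rule mult_left_mono) (auto simp: norminf_def)
  finally show ?thesis by (simp add: norm1_def sum_distrib_right)
qed

lemma sum_J_le:
  fixes d :: "real ^ 'n::finite"
  shows "(\<Sum>j\<in>J. \<bar>d$j\<bar>) \<le> sqrt (card J) * norm d"
proof -
  have "(\<Sum>j\<in>J. \<bar>d$j\<bar>) = (\<Sum>j\<in>J. \<bar>d$j\<bar> * \<bar>1\<bar>)" by simp
  also have "\<dots> \<le> L2_set (\<lambda>j. d$j) J * L2_set (\<lambda>j. 1) J" by (rule L2_set_mult_ineq)
  also have "L2_set (\<lambda>j. 1) J = sqrt (card J)" by (simp add: L2_set_constant)
  also have "L2_set (\<lambda>j. d$j) J \<le> L2_set (\<lambda>j. d$j) UNIV"
    unfolding L2_set_def by (rule real_sqrt_le_mono, rule sum_mono2) auto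
  also have "L2_set (\<lambda>j. d$j) UNIV = norm d" by (simp add: norm_vec_def L2_set_def)
  finally show ?thesis by (simp add: mult.commute mult_right_mono)
qed

theorem mainTheorem2:
  fixes G :: "real ^ 'n::finite ^ 'n" and g bstar bhat :: "real ^ 'n"
    and w :: "'n \<Rightarrow> real" and lam alpha tau :: real and k :: nat
  assumes sym: "transpose G = G"
    and psd: "\<forall>x. quadform G x \<ge> 0"
    and k_def: "k = card (supp bstar)"
    and Jc: "supp bstar \<noteq> UNIV"
    and w_nonneg: "\<forall>j. w j \<ge> 0"
    and w_min: "Min (w ` (- supp bstar)) = 1"
    and lam_pos: "lam > 0"
    and minimizer: "\<forall>b. lasso_obj G g w lam bhat \<le> lasso_obj G g w lam b"
    and noise: "norminf (g - G *v bstar) \<le> lam / 4"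
    and alpha_pos: "alpha > 0" and tau_nonneg: "tau \<ge> 0"
    and RE: "\<forall>\<theta>. quadform G \<theta> \<ge> alpha * (norm \<theta>)\<^sup>2 - tau * (norm1 \<theta>)\<^sup>2"
    and cond: "4 * (1 + (if supp bstar = {} then 0 else Max (w ` supp bstar)))\<^sup>2 * real k * tau \<le> alpha / 2"
  shows "let r = (if supp bstar = {} then 0 else Max (w ` supp bstar)) in
     norm (bhat - bstar) \<le> (1 + 2 * r) / alpha * sqrt (real k) * lam
   \<and> norm1 (bhat - bstar) \<le> (2 + 6 * r + 4 * r\<^sup>2) / alpha * real k * lam
   \<and> quadform G (bhat - bstar) \<le> (1 + 2 * r)\<^sup>2 / (2 * alpha) * real k * lam\<^sup>2
   \<and> (supp bstar \<noteq> {} \<longrightarrow>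
        real (card (supp bstar - supp bhat))
          \<le> (2 + 6 * r + 4 * r\<^sup>2) / (Min ((\<lambda>j. \<bar>bstar $ j\<bar>) ` supp bstar) * alpha) * real k * lam)
   \<and> real (card (supp (\<chi> j. if \<bar>bhat $ j\<bar> > lam then bhat $ j else 0) - supp bstar))
        \<le> (1 + 2 * r)\<^sup>2 * real k / alpha"
  proof -
  define J where "J = supp bstar"
  define D where "D = bhat - bstar"
  define hh where "hh = g - G *v bstar"
  define r where "r = (if supp bstar = {} then 0 else Max (w ` supp bstar))"
  define A where "A = (\<Sum>j\<in>J. \<bar>D$j\<bar>)"
  define B where "B = (\<Sum>j\<in>-J. \<bar>D$j\<bar>)"
  define Q where "Q = quadform G D"
  define P where "P = (\<lambda>b::real^'n. \<Sum>j\<in>UNIV. w j * \<bar>b $ j\<bar>)"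
  have splitU: "\<And>f::'n \<Rightarrow> real. sum f UNIV = sum f J + sum f (-J)"
    by (metis add.commute Compl_eq_Diff_UNIV finite subset_UNIV sum.subset_diff)
  have wJc: "\<forall>j. j \<notin> J \<longrightarrow> w j \<ge> 1"
    using w_min unfolding J_def by (metis ComplI Min_le finite finite_imageI image_eqI)
  have r0: "r \<ge> 0" unfolding r_def using w_nonneg Jc
    by (auto intro: order_trans[OF _ Max_ge])
  have wJ: "\<forall>j\<in>J. w j \<le> r" unfolding r_def J_def by auto
  have A0: "A \<ge> 0" unfolding A_def by (simp add: sum_nonneg)
  have B0: "B \<ge> 0" unfolding B_def by (simp add: sum_nonneg)
  have n1: "norm1 D = A + B" unfolding norm1_def A_def B_def by (rule splitU)
  have Q0: "Q \<ge> 0" unfolding Q_def using psd by auto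
  have bh: "bhat = bstar + D" unfolding D_def by simp
  have basic: "Q \<le> 2 * (D \<bullet> hh) + lam * (P bstar - P bhat)"
  proof -
    have "lasso_obj G g w lam bhat \<le> lasso_obj G g w lam bstar" using minimizer by auto
    hence "- 2 * ((bstar + D) \<bullet> g) + quadform G (bstar + D) + lam * P bhat
        \<le> - 2 * (bstar \<bullet> g) + quadform G bstar + lam * P bstar"
      unfolding lasso_obj_def P_def using bh by simp
    thus ?thesis unfolding quad_add[OF sym] Q_def hh_def
      by (simp add: inner_add_left inner_diff_right algebra_simps)
  qed
  have pen: "P bstar - P bhat \<le> r * A - B"
  proof -
    have "P bstar - P bhat = (\<Sum>j\<in>UNIV. w j * (\<bar>bstar$j\<bar> - \<bar>bhat$j\<bar>))"
      unfolding P_def by (simp add: sum_subtractf algebra_simps)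
    also have "\<dots> = (\<Sum>j\<in>J. w j * (\<bar>bstar$j\<bar> - \<bar>bhat$j\<bar>)) + (\<Sum>j\<in>-J. w j * (\<bar>bstar$j\<bar> - \<bar>bhat$j\<bar>))"
      by (rule splitU)
    also have "(\<Sum>j\<in>J. w j * (\<bar>bstar$j\<bar> - \<bar>bhat$j\<bar>)) \<le> (\<Sum>j\<in>J. r * \<bar>D$j\<bar>)"
    proof (rule sum_mono)
      fix j assume j: "j \<in> J"
      have "\<bar>bstar$j\<bar> - \<bar>bhat$j\<bar> \<le> \<bar>D$j\<bar>" unfolding D_def by simp
      hence "w j * (\<bar>bstar$j\<bar> - \<bar>bhat$j\<bar>) \<le> w j * \<bar>D$j\<bar>"
        using w_nonneg by (simp add: mult_left_mono)
      also have "\<dots> \<le> r * \<bar>D$j\<bar>" using wJ j by (simp add: mult_right_mono)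
      finally show "w j * (\<bar>bstar$j\<bar> - \<bar>bhat$j\<bar>) \<le> r * \<bar>D$j\<bar>" .
    qed
    also have "(\<Sum>j\<in>-J. w j * (\<bar>bstar$j\<bar> - \<bar>bhat$j\<bar>)) \<le> (\<Sum>j\<in>-J. - \<bar>D$j\<bar>)"
    proof (rule sum_mono)
      fix j assume j: "j \<in> -J"
      hence z: "bstar$j = 0" unfolding J_def supp_def by auto
      have "w j * \<bar>D$j\<bar> \<ge> 1 * \<bar>D$j\<bar>" using wJc j by (intro mult_right_mono) auto
      thus "w j * (\<bar>bstar$j\<bar> - \<bar>bhat$j\<bar>) \<le> - \<bar>D$j\<bar>" using z unfolding D_def by simp
    qed
    finally show ?thesis unfolding A_def B_def by (simp add: sum_distrib_left sum_negf)
  qed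
  have dh: "2 * (D \<bullet> hh) \<le> lam / 2 * (A + B)"
  proof -
    have "D \<bullet> hh \<le> norm1 D * norminf hh" using inner_le_norm1[of D hh] by linarith
    also have "\<dots> \<le> norm1 D * (lam / 4)" using noise n1 A0 B0 unfolding hh_def
      by (intro mult_left_mono) auto
    finally show ?thesis using n1 by (simp add: algebra_simps)
  qed
  have key: "Q \<le> lam * (1/2 + r) * A - lam / 2 * B"
  proof -
    have "Q \<le> lam / 2 * (A + B) + lam * (r * A - B)"
      using basic dh mult_left_mono[OF pen, of lam] lam_pos by linarith
    thus ?thesis by (simp add: algebra_simps add_divide_distrib)
  qed
  have BA: "B \<le> (1 + 2 * r) * A"
  proof -
    have "0 \<le> lam * ((1/2 + r) * A - B / 2)" using key Q0 by (simp add: algebra_simps)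
    hence "0 \<le> (1/2 + r) * A - B / 2" using lam_pos by (simp add: zero_le_mult_iff)
    thus ?thesis by (simp add: algebra_simps)
  qed
  define nD where "nD = norm D"
  define s where "s = sqrt (real k)"
  have s0: "s \<ge> 0" unfolding s_def by simp
  have ss: "s * s = real k" unfolding s_def by simp
  have nD0: "nD \<ge> 0" unfolding nD_def by simp
  have AS: "A \<le> s * nD" unfolding A_def s_def nD_def k_def J_def by (rule sum_J_le)
  have N1: "norm1 D \<le> 2 * (1 + r) * s * nD"
  proof -
    have "2 * (1 + r) * A \<le> 2 * (1 + r) * (s * nD)" using AS r0 by (intro mult_left_mono) auto
    thus ?thesis using n1 BA by (simp add: algebra_simps)
  qed
  have N1sq: "(norm1 D)\<^sup>2 \<le> 4 * (1 + r)\<^sup>2 * real k * nD\<^sup>2"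
  proof -
    have "(norm1 D)\<^sup>2 \<le> (2 * (1 + r) * s * nD)\<^sup>2"
      using N1 n1 A0 B0 by (intro power_mono) auto
    also have "\<dots> = 4 * (1 + r)\<^sup>2 * (s * s) * nD\<^sup>2" by (simp add: power2_eq_square algebra_simps)
    finally show ?thesis using ss by simp
  qed
  have condr: "4 * (1 + r)\<^sup>2 * real k * tau \<le> alpha / 2" using cond unfolding r_def .
  have lowQ: "alpha / 2 * nD\<^sup>2 \<le> Q"
  proof -
    have "alpha * nD\<^sup>2 - tau * (norm1 D)\<^sup>2 \<le> Q" using spec[OF RE, of D] unfolding Q_def nD_def .
    moreover have "tau * (norm1 D)\<^sup>2 \<le> tau * (4 * (1 + r)\<^sup>2 * real k * nD\<^sup>2)"
      by (rule mult_left_mono[OF N1sq tau_nonneg])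
    moreover have "tau * (4 * (1 + r)\<^sup>2 * real k * nD\<^sup>2) \<le> alpha / 2 * nD\<^sup>2"
    proof -
      have "tau * (4 * (1 + r)\<^sup>2 * real k * nD\<^sup>2) = (4 * (1 + r)\<^sup>2 * real k * tau) * nD\<^sup>2"
        by (simp add: algebra_simps)
      also have "\<dots> \<le> alpha / 2 * nD\<^sup>2" by (rule mult_right_mono[OF condr]) simp
      finally show ?thesis .
    qed
    ultimately show ?thesis by linarith
  qed
  have upQ: "Q \<le> lam * (1/2 + r) * s * nD"
  proof -
    have "lam / 2 * B \<ge> 0" using B0 lam_pos by simp
    hence "Q \<le> lam * (1/2 + r) * A" using key by linarith
    also have "\<dots> \<le> lam * (1/2 + r) * (s * nD)" using AS lam_pos r0 by (intro mult_left_mono) auto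
    finally show ?thesis by (simp add: algebra_simps)
  qed
  have bound2: "nD \<le> (1 + 2 * r) / alpha * s * lam"
  proof (cases "nD = 0")
    case True thus ?thesis using r0 alpha_pos s0 lam_pos by simp
  next
    case False
    hence pos: "nD > 0" using nD0 by simp
    have "alpha / 2 * nD * nD \<le> lam * (1/2 + r) * s * nD" using lowQ upQ by (simp add: power2_eq_square algebra_simps)
    hence "alpha / 2 * nD \<le> lam * (1/2 + r) * s" using pos by (simp add: mult_le_cancel_right)
    hence "alpha * nD \<le> (1 + 2 * r) * s * lam" by (simp add: algebra_simps)
    thus ?thesis using alpha_pos by (simp add: pos_le_divide_eq mult.commute mult.left_commute)
  qed
  have snD: "s * nD \<le> (1 + 2 * r) / alpha * real k * lam"
  proof -
    have "s * nD \<le> s * ((1 + 2 * r) / alpha * s * lam)" using bound2 s0 by (rule mult_left_mono)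
    also have "\<dots> = (1 + 2 * r) / alpha * (s * s) * lam" by (simp add: algebra_simps)
    finally show ?thesis using ss by simp
  qed
  have c1: "norm1 D \<le> (2 + 6 * r + 4 * r\<^sup>2) / alpha * real k * lam"
  proof -
    have "norm1 D \<le> 2 * (1 + r) * (s * nD)" using N1 by (simp add: algebra_simps)
    also have "\<dots> \<le> 2 * (1 + r) * ((1 + 2 * r) / alpha * real k * lam)"
      using snD r0 by (intro mult_left_mono) auto
    also have "\<dots> = (2 + 6 * r + 4 * r\<^sup>2) / alpha * real k * lam"
      by (simp add: power2_eq_square algebra_simps add_divide_distrib)
    finally show ?thesis .
  qed
  have c2: "Q \<le> (1 + 2 * r)\<^sup>2 / (2 * alpha) * real k * lam\<^sup>2"
  proof -
    have "Q \<le> lam * (1/2 + r) * (s * nD)" using upQ by (simp add: algebra_simps)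
    also have "\<dots> \<le> lam * (1/2 + r) * ((1 + 2 * r) / alpha * real k * lam)"
      using snD r0 lam_pos by (intro mult_left_mono) auto
    also have "\<dots> = (1 + 2 * r)\<^sup>2 / (2 * alpha) * real k * lam\<^sup>2"
      using alpha_pos by (simp add: power2_eq_square algebra_simps add_divide_distrib)
    finally show ?thesis .
  qed
  have c3: "supp bstar \<noteq> {} \<longrightarrow>
        real (card (supp bstar - supp bhat))
          \<le> (2 + 6 * r + 4 * r\<^sup>2) / (Min ((\<lambda>j. \<bar>bstar $ j\<bar>) ` supp bstar) * alpha) * real k * lam"
  proof
    assume ne: "supp bstar \<noteq> {}"
    define s0 where "s0 = Min ((\<lambda>j. \<bar>bstar $ j\<bar>) ` supp bstar)"
    have s0pos: "s0 > 0" unfolding s0_def using ne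
      by (subst Min_gr_iff) (auto simp: supp_def)
    have "real (card (supp bstar - supp bhat)) * s0 = (\<Sum>j\<in>supp bstar - supp bhat. s0)" by simp
    also have "\<dots> \<le> (\<Sum>j\<in>supp bstar - supp bhat. \<bar>D$j\<bar>)"
    proof (rule sum_mono)
      fix j assume j: "j \<in> supp bstar - supp bhat"
      hence "s0 \<le> \<bar>bstar$j\<bar>" unfolding s0_def by (intro Min_le) auto
      thus "s0 \<le> \<bar>D$j\<bar>" using j unfolding D_def supp_def by simp
    qed
    also have "\<dots> \<le> (\<Sum>j\<in>UNIV. \<bar>D$j\<bar>)" by (rule sum_mono2) auto
    also have "\<dots> \<le> (2 + 6 * r + 4 * r\<^sup>2) / alpha * real k * lam" using c1 unfolding norm1_def .
    finally have "real (card (supp bstar - supp bhat)) * s0 \<le> (2 + 6 * r + 4 * r\<^sup>2) / alpha * real k * lam" .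
    thus "real (card (supp bstar - supp bhat))
          \<le> (2 + 6 * r + 4 * r\<^sup>2) / (Min ((\<lambda>j. \<bar>bstar $ j\<bar>) ` supp bstar) * alpha) * real k * lam"
      using s0pos alpha_pos unfolding s0_def[symmetric] by (simp add: pos_le_divide_eq mult.commute mult.left_commute)
  qed
  have c4: "real (card (supp (\<chi> j. if \<bar>bhat $ j\<bar> > lam then bhat $ j else 0) - supp bstar))
        \<le> (1 + 2 * r)\<^sup>2 * real k / alpha"
  proof -
    define T where "T = supp (\<chi> j. if \<bar>bhat $ j\<bar> > lam then bhat $ j else 0) - supp bstar"
    have "real (card T) * lam = (\<Sum>j\<in>T. lam)" by simp
    also have "\<dots> \<le> (\<Sum>j\<in>T. \<bar>D$j\<bar>)"
    proof (rule sum_mono)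
      fix j assume j: "j \<in> T"
      hence "lam < \<bar>bhat$j\<bar>" "bstar $ j = 0" unfolding T_def supp_def by (auto split: if_splits)
      thus "lam \<le> \<bar>D$j\<bar>" unfolding D_def by simp
    qed
    also have "\<dots> \<le> B" unfolding B_def T_def J_def by (rule sum_mono2) auto
    also have "\<dots> \<le> (1 + 2 * r) * (s * nD)" using order_trans[OF BA mult_left_mono[OF AS]] r0 by simp
    also have "\<dots> \<le> (1 + 2 * r) * ((1 + 2 * r) / alpha * real k * lam)"
      using snD r0 by (intro mult_left_mono) auto
    also have "\<dots> = (1 + 2 * r)\<^sup>2 * real k / alpha * lam" by (simp add: power2_eq_square)
    finally have "real (card T) * lam \<le> (1 + 2 * r)\<^sup>2 * real k / alpha * lam" .
    hence "real (card T) \<le> (1 + 2 * r)\<^sup>2 * real k / alpha" using lam_pos by (rule mult_right_le_imp_le)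
    thus ?thesis unfolding T_def .
  qed
  have c0: "norm (bhat - bstar) \<le> (1 + 2 * r) / alpha * sqrt (real k) * lam"
    using bound2 unfolding nD_def D_def s_def .
  show ?thesis unfolding Let_def r_def[symmetric]
    using c0 c1 c2 c3 c4 unfolding D_def Q_def by blast
qed

end
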